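(* Let $N\in\mathbb N$ be fixed. There exist constants $C,\alpha>0$ such that for every $T>0$ and every two solutions $u_1(t),u_2(t)$, $t\in[-T,0]$, of (E) with $u_1(t)-u_2(t)\in K^+$ for all $t\in[-T,0]$, one has $\|u_1(-T)-u_2(-T)\|^2_{H^{-1}}\le Ce^{\alpha T}\|P_Nu_1(0)-P_Nu_2(0)\|^2_{H^{-1}}.$
   Context: Let $H$ be a real separable Hilbert space with inner product $(\cdot,\cdot)$ and norm $\|\cdot\|_H$, and let $A:D(A)\to H$ be a linear self-adjoint positive operator with compact inverse, with orthonormal eigenbasis $\{e_n\}$, $Ae_n=\lambda_ne_n$, $0<\lambda_1\le\lambda_2\le\dots\to\infty$. For $s\ge0$, $H^s=D(A^{s/2})$ with $\|u\|_{H^s}^2=\sum_n\lambda_n^s|(u,e_n)|^2$; for $s<0$, $H^s$ is the completion of $H$ in this norm. $P_Nu=\sum_{n\le N}(u,e_n)e_n$, $Q_N=\mathrm{Id}-P_N$. $F:H\to H$ is globally bounded and globally Lipschitz with constant $L$. (E) is $\partial_tu+A^2u+AF(u)=0$. $V(\xi)=\|Q_N\xi\|^2_{H^{-1}}-\|P_N\xi\|^2_{H^{-1}}$, $K^+=\{\xi\in H^{-1}:V(\xi)\le0\}$. The constants $C,\alpha$ may depend on $N$, $A$, $L$ but not on $u_1,u_2,T$. *)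

theory Defs
  imports "HOL-Analysis.Analysis"
begin

text \<open>The operator A is given through its spectral data: an orthonormal
  eigenbasis e (indexed from 0) with eigenvalues lam,
  A (e n) = lam n *R e n, 0 < lam 0 \<le> lam 1 \<le> ... tending to infinity.
  (A self-adjoint positive with compact inverse is exactly determined by such data.)\<close>

definition spectral_data :: "(nat \<Rightarrow> 'a::{real_inner,complete_space}) \<Rightarrow> (nat \<Rightarrow> real) \<Rightarrow> bool" where
  "spectral_data e lam \<longleftrightarrow>
     (\<forall>m n. inner (e m) (e n) = (if m = n then 1 else 0)) \<and>
     (\<forall>u. (\<lambda>n. inner u (e n) *\<^sub>R e n) sums u) \<and>
     0 < lam 0 \<and> mono lam \<and> filterlim lam at_top sequentially"

definition hm1_sq :: "(nat \<Rightarrow> 'a::real_inner) \<Rightarrow> (nat \<Rightarrow> real) \<Rightarrow> 'a \<Rightarrow> real" where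
  "hm1_sq e lam \<xi> = (\<Sum>n. (inner \<xi> (e n))\<^sup>2 / lam n)"

definition projP :: "(nat \<Rightarrow> 'a::real_inner) \<Rightarrow> nat \<Rightarrow> 'a \<Rightarrow> 'a" where
  "projP e N u = (\<Sum>n<N. inner u (e n) *\<^sub>R e n)"

definition projQ :: "(nat \<Rightarrow> 'a::real_inner) \<Rightarrow> nat \<Rightarrow> 'a \<Rightarrow> 'a" where
  "projQ e N u = u - projP e N u"

definition Vfun :: "(nat \<Rightarrow> 'a::real_inner) \<Rightarrow> (nat \<Rightarrow> real) \<Rightarrow> nat \<Rightarrow> 'a \<Rightarrow> real" where
  "Vfun e lam N \<xi> = hm1_sq e lam (projQ e N \<xi>) - hm1_sq e lam (projP e N \<xi>)"

definition Kplus :: "(nat \<Rightarrow> 'a::real_inner) \<Rightarrow> (nat \<Rightarrow> real) \<Rightarrow> nat \<Rightarrow> 'a set" where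
  "Kplus e lam N = {\<xi>. Vfun e lam N \<xi> \<le> 0}"

text \<open>Solution of (E): u_t + A^2 u + A F(u) = 0 on [-T,0]: u continuous into H and,
  testing the equation against each eigenvector e n (A self-adjoint),
  d/dt (u,e_n) = - lam_n^2 (u,e_n) - lam_n (F(u),e_n) on [-T,0].\<close>
definition is_solution :: "(nat \<Rightarrow> 'a::real_inner) \<Rightarrow> (nat \<Rightarrow> real) \<Rightarrow> ('a \<Rightarrow> 'a) \<Rightarrow> real \<Rightarrow> (real \<Rightarrow> 'a) \<Rightarrow> bool" where
  "is_solution e lam F T u \<longleftrightarrow>
     continuous_on {-T..0} u \<and>
     (\<forall>n. \<forall>t\<in>{-T..0}.
        ((\<lambda>s. inner (u s) (e n)) has_real_derivative
           (- (lam n)\<^sup>2 * inner (u t) (e n) - lam n * inner (F (u t)) (e n))) (at t within {-T..0}))"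

end

theory Submission
  imports Defs
begin


lemma sd_orth: "spectral_data e lam \<Longrightarrow> inner (e m) (e n) = (if m = n then 1 else 0)"
  by (simp add: spectral_data_def)

lemma sd_sums: "spectral_data e lam \<Longrightarrow> (\<lambda>n. inner u (e n) *\<^sub>R e n) sums u"
  by (simp add: spectral_data_def)

lemma sd_lam_pos: "spectral_data e lam \<Longrightarrow> 0 < lam n"
proof -
  assume s: "spectral_data e lam"
  hence "0 < lam 0" "mono lam" by (auto simp: spectral_data_def)
  thus ?thesis by (metis le0 monoD order_less_le_trans)
qed

lemma sd_lam_ge0: "spectral_data e lam \<Longrightarrow> lam 0 \<le> lam n"
  by (simp add: spectral_data_def monoD)

lemma sd_lam_mono: "spectral_data e lam \<Longrightarrow> m \<le> n \<Longrightarrow> lam m \<le> lam n"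
  by (simp add: spectral_data_def monoD)

lemma inner_sum_e:
  assumes "spectral_data e lam" "finite S"
  shows "inner (\<Sum>n\<in>S. a n *\<^sub>R e n) (e m) = (if m \<in> S then a m else 0)"
  using assms(2) by (simp add: inner_sum_left sd_orth[OF assms(1)] if_distrib cong: if_cong)

lemma inner_sum_e_left:
  "inner (\<Sum>n\<in>S. a n *\<^sub>R e n) y = (\<Sum>n\<in>S. a n * inner (e n) y)"
  by (simp add: inner_sum_left)

lemma norm_sum_e_sq:
  assumes "spectral_data e lam" "finite S"
  shows "(norm (\<Sum>n\<in>S. a n *\<^sub>R e n))\<^sup>2 = (\<Sum>n\<in>S. (a n)\<^sup>2)"
proof -
  have "(norm (\<Sum>n\<in>S. a n *\<^sub>R e n))\<^sup>2 = inner (\<Sum>n\<in>S. a n *\<^sub>R e n) (\<Sum>n\<in>S. a n *\<^sub>R e n)"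
    by (simp add: power2_norm_eq_inner)
  also have "\<dots> = (\<Sum>m\<in>S. a m * inner (\<Sum>n\<in>S. a n *\<^sub>R e n) (e m))"
    by (simp only: inner_sum_right inner_scaleR_right)
  also have "\<dots> = (\<Sum>m\<in>S. (a m)\<^sup>2)"
    using inner_sum_e[OF assms] by (simp add: power2_eq_square)
  finally show ?thesis .
qed

lemma coef_projP:
  assumes "spectral_data e lam"
  shows "inner (projP e N x) (e n) = (if n < N then inner x (e n) else 0)"
  unfolding projP_def using inner_sum_e[OF assms, of "{..<N}"] by simp

lemma coef_projQ:
  assumes "spectral_data e lam"
  shows "inner (projQ e N x) (e n) = (if n < N then 0 else inner x (e n))"
  unfolding projQ_def using coef_projP[OF assms] by (simp add: inner_diff_left)

lemma norm_projP_sq: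
  assumes "spectral_data e lam"
  shows "(norm (projP e N x))\<^sup>2 = (\<Sum>n<N. (inner x (e n))\<^sup>2)"
  unfolding projP_def using norm_sum_e_sq[OF assms] by simp

lemma pythag:
  assumes "spectral_data e lam"
  shows "(norm x)\<^sup>2 = (norm (projP e N x))\<^sup>2 + (norm (x - projP e N x))\<^sup>2"
proof -
  have o: "inner (x - projP e N x) (projP e N x) = 0"
  proof -
    have "inner x (projP e N x) = (\<Sum>n<N. (inner x (e n))\<^sup>2)"
      unfolding projP_def by (simp add: inner_sum_right power2_eq_square)
    moreover have "inner (projP e N x) (projP e N x) = (\<Sum>n<N. (inner x (e n))\<^sup>2)"
      using norm_projP_sq[OF assms] by (simp add: power2_norm_eq_inner)
    ultimately show ?thesis by (simp add: inner_diff_left)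
  qed
  have "x = projP e N x + (x - projP e N x)" by simp
  hence "(norm x)\<^sup>2 = (norm (projP e N x + (x - projP e N x)))\<^sup>2" by simp
  also have "\<dots> = (norm (projP e N x))\<^sup>2 + (norm (x - projP e N x))\<^sup>2"
    using o by (intro norm_add_Pythagorean) (simp add: inner_commute orthogonal_def)
  finally show ?thesis .
qed

lemma bessel:
  assumes "spectral_data e lam"
  shows "(\<Sum>n<N. (inner x (e n))\<^sup>2) \<le> (norm x)\<^sup>2"
  using pythag[OF assms, of x N] norm_projP_sq[OF assms] by simp

lemma summable_coef_sq:
  assumes "spectral_data e lam"
  shows "summable (\<lambda>n. (inner x (e n))\<^sup>2)"
  by (rule summableI_nonneg_bounded[where x="(norm x)\<^sup>2"]) (use bessel[OF assms] in auto)

lemma summable_hm1: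
  assumes "spectral_data e lam"
  shows "summable (\<lambda>n. (inner x (e n))\<^sup>2 / lam n)"
proof (rule summable_comparison_test'[where g="\<lambda>n. (inner x (e n))\<^sup>2 / lam 0"])
  show "summable (\<lambda>n. (inner x (e n))\<^sup>2 / lam 0)"
    using summable_coef_sq[OF assms] by (rule summable_divide)
  fix n
  have "0 < lam 0" "lam 0 \<le> lam n" using sd_lam_pos[OF assms] sd_lam_ge0[OF assms] by auto
  thus "norm ((inner x (e n))\<^sup>2 / lam n) \<le> (inner x (e n))\<^sup>2 / lam 0"
    by (simp add: frac_le)
qed

lemma hm1_projP:
  assumes "spectral_data e lam"
  shows "hm1_sq e lam (projP e N x) = (\<Sum>n<N. (inner x (e n))\<^sup>2 / lam n)"
  unfolding hm1_sq_def coef_projP[OF assms]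
  by (subst suminf_finite[of "{..<N}"]) auto

lemma hm1_split:
  assumes "spectral_data e lam"
  shows "hm1_sq e lam x = hm1_sq e lam (projP e N x) + hm1_sq e lam (projQ e N x)"
proof -
  let ?f = "\<lambda>n. (inner (projP e N x) (e n))\<^sup>2 / lam n"
  let ?g = "\<lambda>n. (inner (projQ e N x) (e n))\<^sup>2 / lam n"
  have "summable ?f" "summable ?g" using summable_hm1[OF assms] by blast+
  hence "suminf ?f + suminf ?g = (\<Sum>n. ?f n + ?g n)" by (rule suminf_add)
  also have "(\<lambda>n. ?f n + ?g n) = (\<lambda>n. (inner x (e n))\<^sup>2 / lam n)"
    by (rule ext) (simp add: coef_projP[OF assms] coef_projQ[OF assms])
  finally show ?thesis by (simp add: hm1_sq_def)
qed

lemma hm1_nonneg: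
  assumes "spectral_data e lam"
  shows "0 \<le> hm1_sq e lam x"
  unfolding hm1_sq_def
  by (rule suminf_nonneg[OF summable_hm1[OF assms]]) (simp add: sd_lam_pos[OF assms] less_imp_le)

lemma partial_le_hm1:
  assumes "spectral_data e lam"
  shows "(\<Sum>n<K. (inner x (e n))\<^sup>2 / lam n) \<le> hm1_sq e lam x"
  unfolding hm1_sq_def
  by (rule sum_le_suminf[OF summable_hm1[OF assms]]) (auto simp: sd_lam_pos[OF assms] less_imp_le)

lemma cone_bound:
  assumes "spectral_data e lam" "x \<in> Kplus e lam N"
  shows "hm1_sq e lam x \<le> 2 * hm1_sq e lam (projP e N x)"
  using assms(2) hm1_split[OF assms(1), of x N] by (simp add: Kplus_def Vfun_def)

lemma projP_diff: "projP e N x - projP e N y = projP e N (x - y)"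
  by (simp add: projP_def inner_diff_left scaleR_diff_left sum_subtractf)



lemma key_ineq:
  fixes p Phi r t L sg nP YN pd fd Y G :: real
  assumes p: "0 < p" and pP: "p \<le> Phi" and P2: "Phi \<le> 2*p" and r: "0 \<le> r" and t: "0 \<le> t"
    and tp: "t\<^sup>2 \<le> p" and L: "0 \<le> L" and sg: "0 \<le> sg" and nP0: "0 \<le> nP"
    and nP: "nP \<le> sg * sqrt p" and YN: "YN \<le> sg^4 * p" and pd: "pd \<ge> -2*YN - 2*nP*G"
    and G0: "0 \<le> G" and G: "G \<le> L*(r+t)" and Y: "(r\<^sup>2)\<^sup>2 \<le> Y*Phi"
    and fd: "fd \<le> -2*Y + 2*r*G"
  shows "0 \<le> pd/p - fd/(2*Phi) + (2* sg^4 + 2*L* sg + 2*L\<^sup>2 + (L+2*L* sg)\<^sup>2/2 + (L+2*L* sg)/2)"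
proof -
  define q where "q = sqrt p"
  have q: "0 < q" "q\<^sup>2 = p" using p by (auto simp: q_def)
  have tq: "t \<le> q" using tp q t by (metis abs_of_nonneg less_imp_le real_sqrt_abs real_sqrt_le_mono q_def)
  define z where "z = r / q"
  have rz: "r = z*q" using q by (simp add: z_def)
  have z0: "0 \<le> z" using r q by (simp add: z_def)
  have Phi0: "0 < Phi" using p pP by linarith
  define B where "B = L + 2*L* sg"
  have B0: "0 \<le> B" using L sg by (simp add: B_def)
  have nPG: "nP * G \<le> sg*q*(L*(z*q+q))"
  proof -
    have "nP * G \<le> (sg*q) * (L*(r+t))"
      using nP G nP0 G0 by (intro mult_mono) (auto simp: q_def)
    also have "\<dots> \<le> sg*q*(L*(z*q+q))"
      using tq rz sg q L by (intro mult_left_mono) auto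
    finally show ?thesis .
  qed
  have A1: "pd/p \<ge> -2* sg^4 - 2* sg*L*z - 2* sg*L"
  proof -
    have "pd \<ge> -2*(sg^4*p) - 2*(sg*q*(L*(z*q+q)))" using pd YN nPG by linarith
    also have "-2*(sg^4*p) - 2*(sg*q*(L*(z*q+q))) = (-2* sg^4 - 2* sg*L*z - 2* sg*L) * p"
      using q(2)[symmetric] by (simp add: algebra_simps power2_eq_square)
    finally show ?thesis using p by (simp add: pos_le_divide_eq)
  qed
  have A2: "- fd/(2*Phi) \<ge> z^4/4 - L*z\<^sup>2 - L*z"
  proof -
    have "- fd/(2*Phi) \<ge> (Y - r*G)/Phi"
      using fd Phi0 by (simp add: divide_simps)
    moreover have "Y/Phi \<ge> z^4/4"
    proof -
      have "Y/Phi \<ge> (r\<^sup>2)\<^sup>2/Phi\<^sup>2" using Y Phi0 by (simp add: divide_simps power2_eq_square)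
      moreover have "(r\<^sup>2)\<^sup>2/Phi\<^sup>2 \<ge> (r\<^sup>2)\<^sup>2/(2*p)\<^sup>2"
      proof (rule divide_left_mono)
        show "Phi\<^sup>2 \<le> (2*p)\<^sup>2" using P2 Phi0 by (intro power_mono) auto
      qed (use Phi0 p in auto)
      moreover have "(r\<^sup>2)\<^sup>2/(2*p)\<^sup>2 = z^4/4"
        using q rz p by (simp add: power2_eq_square field_simps power4_eq_xxxx flip: q(2))
      ultimately show ?thesis by linarith
    qed
    moreover have "r*G/Phi \<le> L*z\<^sup>2 + L*z"
    proof -
      have "r*G \<le> r*(L*(r+t))" using G r by (simp add: mult_left_mono)
      also have "\<dots> \<le> L*(z*q)*(z*q+q)" using rz tq L z0 q
      proof -
        have "L * (q * (t * z)) \<le> L * (q * (q * z))"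
          using tq L z0 q by (intro mult_left_mono) (auto intro: mult_right_mono)
        thus ?thesis using rz by (simp add: algebra_simps)
      qed
      also have "\<dots> = (L*z\<^sup>2 + L*z) * p" using q(2)[symmetric] by (simp add: power2_eq_square algebra_simps)
      also have "\<dots> \<le> (L*z\<^sup>2 + L*z) * Phi" using pP L z0 by (intro mult_left_mono) auto
      finally show ?thesis using Phi0 by (simp add: pos_divide_le_eq)
    qed
    moreover have "(Y - r*G)/Phi = Y/Phi - r*G/Phi" by (simp add: diff_divide_distrib)
    ultimately show ?thesis by linarith
  qed
  have A3: "z^4/4 - L*z\<^sup>2 - B*z + 2*L\<^sup>2 + B\<^sup>2/2 + B/2 \<ge> 0"
  proof -
    have "0 \<le> (z\<^sup>2 - 4*L)\<^sup>2/8 + (z\<^sup>2 - 2*B)\<^sup>2/8 + B*(z-1)\<^sup>2/2" using B0 by simp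
    also have "\<dots> = z^4/4 - L*z\<^sup>2 - B*z + 2*L\<^sup>2 + B\<^sup>2/2 + B/2"
      unfolding power2_eq_square power4_eq_xxxx by (simp add: field_simps)
    finally show ?thesis .
  qed
  have "- fd/(2*Phi) = -(fd/(2*Phi))" by simp
  thus ?thesis using A1 A2 A3 unfolding B_def by (simp add: algebra_simps)
qed



lemma tail_mono:
  assumes sd: "spectral_data e lam" and "K \<le> K'"
  shows "norm (x - projP e K' x) \<le> norm (x - projP e K x)"
proof -
  have "(norm (x - projP e K' x))\<^sup>2 = (norm x)\<^sup>2 - (\<Sum>n<K'. (inner x (e n))\<^sup>2)"
    using pythag[OF sd, of x K'] norm_projP_sq[OF sd] by simp
  moreover have "(norm (x - projP e K x))\<^sup>2 = (norm x)\<^sup>2 - (\<Sum>n<K. (inner x (e n))\<^sup>2)"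
    using pythag[OF sd, of x K] norm_projP_sq[OF sd] by simp
  moreover have "(\<Sum>n<K. (inner x (e n))\<^sup>2) \<le> (\<Sum>n<K'. (inner x (e n))\<^sup>2)"
    using assms(2) by (intro sum_mono2) auto
  ultimately have "(norm (x - projP e K' x))\<^sup>2 \<le> (norm (x - projP e K x))\<^sup>2" by linarith
  thus ?thesis by (rule power2_le_imp_le) simp
qed

lemma tail_lim:
  assumes sd: "spectral_data e lam"
  shows "(\<lambda>K. norm (x - projP e K x)) \<longlonglongrightarrow> 0"
proof -
  have "(\<lambda>K. projP e K x) \<longlonglongrightarrow> x"
    using sd_sums[OF sd, of x] by (simp add: sums_def projP_def)
  hence "(\<lambda>K. x - projP e K x) \<longlonglongrightarrow> x - x" by (rule tendsto_diff[OF tendsto_const])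
  hence "(\<lambda>K. norm (x - projP e K x)) \<longlonglongrightarrow> norm (x - x)" by (rule tendsto_norm)
  thus ?thesis by simp
qed

lemma unif_tail:
  assumes sd: "spectral_data e lam" and S: "compact S" and w: "continuous_on S w" and ep: "0 < \<epsilon>"
  shows "\<exists>K. \<forall>s\<in>S. norm (w s - projP e K (w s)) < \<epsilon>"
proof -
  define h where "h K s = norm (w s - projP e K (w s))" for K s
  have hc: "continuous_on S (h K)" for K
    unfolding h_def projP_def by (intro continuous_intros w)
  have "\<forall>K. \<exists>A. open A \<and> A \<inter> S = h K -` {..<\<epsilon>} \<inter> S"
    using hc[unfolded continuous_on_open_invariant, rule_format, OF open_lessThan] by blast
  then obtain V where V0: "\<forall>K. open (V K) \<and> V K \<inter> S = h K -` {..<\<epsilon>} \<inter> S"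
    by (rule choice[THEN exE]) blast
  hence V: "\<And>K. open (V K)" "\<And>K. V K \<inter> S = h K -` {..<\<epsilon>} \<inter> S" by auto
  have cov: "S \<subseteq> (\<Union>K\<in>UNIV. V K)"
  proof
    fix s assume s: "s \<in> S"
    have "eventually (\<lambda>K. h K s < \<epsilon>) sequentially"
      using order_tendstoD(2)[OF tail_lim[OF sd, of "w s"] ep] unfolding h_def .
    then have "\<exists>K. h K s < \<epsilon>" by (rule eventually_happens'[OF sequentially_bot])
    then obtain K where "h K s < \<epsilon>" ..
    hence "s \<in> V K \<inter> S" using V(2)[of K] s by simp
    hence "s \<in> V K" by simp
    thus "s \<in> (\<Union>K\<in>UNIV. V K)" by blast
  qed
  obtain C' where C': "finite C'" "S \<subseteq> (\<Union>K\<in>C'. V K)"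
    by (rule compactE_image[OF S V(1) cov]) auto
  define K where "K = Max (insert 0 C')"
  have "\<forall>s\<in>S. h K s < \<epsilon>"
  proof
    fix s assume s: "s \<in> S"
    then obtain k where k: "k \<in> C'" "s \<in> V k" using C' by blast
    hence "s \<in> V k \<inter> S" using s by simp
    hence "h k s < \<epsilon>" using V(2)[of k] by simp
    moreover have "k \<le> K" using k C' by (simp add: K_def)
    moreover have "h K s \<le> h k s" using tail_mono[OF sd \<open>k \<le> K\<close>] unfolding h_def .
    ultimately show "h K s < \<epsilon>" by linarith
  qed
  hence "\<forall>s\<in>S. norm (w s - projP e K (w s)) < \<epsilon>" by (simp add: h_def)
  thus ?thesis by (rule exI)
qed



definition pk :: "(nat \<Rightarrow> 'a::real_inner) \<Rightarrow> (nat \<Rightarrow> real) \<Rightarrow> nat \<Rightarrow> 'a \<Rightarrow> real" where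
  "pk e lam K x = (\<Sum>n<K. (inner x (e n))\<^sup>2 / lam n)"

definition cst :: "real \<Rightarrow> real \<Rightarrow> real" where
  "cst L sg = 2 * sg^4 + 2*L * sg + 2*L\<^sup>2 + (L+2*L * sg)\<^sup>2/2 + (L+2*L * sg)/2"

lemma pk_nonneg: "spectral_data e lam \<Longrightarrow> 0 \<le> pk e lam K x"
  unfolding pk_def by (intro sum_nonneg) (simp add: sd_lam_pos less_imp_le)

lemma pk_mono: "spectral_data e lam \<Longrightarrow> N \<le> K \<Longrightarrow> pk e lam N x \<le> pk e lam K x"
  unfolding pk_def by (intro sum_mono2) (auto simp: sd_lam_pos less_imp_le)

lemma sol_deriv:
  assumes s: "is_solution e lam F T u" and x: "x \<in> {-T..0}"
  shows "((\<lambda>s. inner (u s) (e n)) has_real_derivative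
           (- (lam n)\<^sup>2 * inner (u x) (e n) - lam n * inner (F (u x)) (e n))) (at x within {-T..0})"
  using s x by (simp add: is_solution_def)

lemma sol_cont:
  assumes s: "is_solution e lam F T u"
  shows "continuous_on {-T..0} u"
  using s by (simp add: is_solution_def)

lemma local_est:
  fixes e :: "nat \<Rightarrow> 'a::{real_inner,complete_space}"
  assumes sd: "spectral_data e lam" and F: "L-lipschitz_on UNIV F"
    and s1: "is_solution e lam F T u1" and s2: "is_solution e lam F T u2"
    and cone: "\<forall>t\<in>{-T..0}. u1 t - u2 t \<in> Kplus e lam N"
    and ab: "-T \<le> a" "a \<le> b" "b \<le> 0"
    and pos: "\<forall>s\<in>{a..b}. 0 < pk e lam N (u1 s - u2 s)"
  shows "pk e lam N (u1 a - u2 a) \<le> 2 * exp (2 * cst L (sqrt (lam N)) * (b-a)) * pk e lam N (u1 b - u2 b)"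
proof -
  define w where "w s = u1 s - u2 s" for s
  define g where "g s = F (u1 s) - F (u2 s)" for s
  define p where "p s = pk e lam N (w s)" for s
  define c where "c = cst L (sqrt (lam N))"
  have lpos: "\<And>n. 0 < lam n" using sd_lam_pos[OF sd] .
  have L0: "0 \<le> L" using F by (simp add: lipschitz_on_def)
  have wc: "continuous_on {-T..0} w" unfolding w_def
    using sol_cont[OF s1] sol_cont[OF s2] by (intro continuous_intros)
  have wcab: "continuous_on {a..b} w" using ab by (intro continuous_on_subset[OF wc]) auto
  have pkc: "continuous_on {a..b} (\<lambda>s. pk e lam K (w s))" for K
    unfolding pk_def using lpos by (intro continuous_intros wcab) (simp add: less_imp_neq[symmetric])
  have ppos: "\<And>s. s \<in> {a..b} \<Longrightarrow> 0 < p s" using pos by (simp add: p_def w_def)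
  obtain x0 where x0: "x0 \<in> {a..b}" "\<forall>y\<in>{a..b}. p x0 \<le> p y"
    using continuous_attains_inf[of "{a..b}" p] pkc[of N] ab unfolding p_def by auto
  define m where "m = p x0"
  have m: "0 < m" "\<And>s. s \<in> {a..b} \<Longrightarrow> m \<le> p s" using x0 ppos by (auto simp: m_def)
  obtain K0 where K0: "\<forall>s\<in>{a..b}. norm (w s - projP e K0 (w s)) < sqrt m"
    using unif_tail[OF sd compact_Icc wcab real_sqrt_gt_zero[OF m(1)]] by blast
  define K where "K = max K0 N"
  have NK: "N \<le> K" by (simp add: K_def)
  have tail: "(norm (w s - projP e K (w s)))\<^sup>2 \<le> p s" if s: "s \<in> {a..b}" for s
  proof -
    have "norm (w s - projP e K (w s)) < sqrt m"
      using tail_mono[OF sd, of K0 K "w s"] K0 s unfolding K_def by (meson le_less_trans max.cobounded1)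
    hence "(norm (w s - projP e K (w s)))\<^sup>2 < (sqrt m)\<^sup>2"
      by (intro power_strict_mono) auto
    thus ?thesis using m(1) m(2)[OF s] by simp
  qed
  define wn where "wn n s = inner (w s) (e n)" for n s
  define gn where "gn n s = inner (g s) (e n)" for n s
  have dwn: "(wn n has_real_derivative (-(lam n)\<^sup>2 * wn n x - lam n * gn n x)) (at x within {-T..0})"
    if x: "x \<in> {-T..0}" for n x
  proof -
    have "((\<lambda>s. inner (u1 s) (e n) - inner (u2 s) (e n)) has_real_derivative
       ((- (lam n)\<^sup>2 * inner (u1 x) (e n) - lam n * inner (F (u1 x)) (e n)) -
        (- (lam n)\<^sup>2 * inner (u2 x) (e n) - lam n * inner (F (u2 x)) (e n)))) (at x within {-T..0})"
      by (rule DERIV_diff[OF sol_deriv[OF s1 x] sol_deriv[OF s2 x]])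
    moreover have "(\<lambda>s. inner (u1 s) (e n) - inner (u2 s) (e n)) = wn n"
      by (rule ext) (simp add: wn_def w_def inner_diff_left)
    ultimately show ?thesis
      by (simp add: wn_def gn_def w_def g_def inner_diff_left algebra_simps)
  qed
  define fdv where "fdv J x = (\<Sum>n<J. 2 * wn n x * (-(lam n)\<^sup>2 * wn n x - lam n * gn n x) / lam n)" for J x
  have dpk: "((\<lambda>s. pk e lam J (w s)) has_real_derivative fdv J x) (at x within {-T..0})"
    if x: "x \<in> {-T..0}" for J x
  proof -
    have eq: "(\<lambda>s. pk e lam J (w s)) = (\<lambda>s. \<Sum>n<J. (wn n s)^2 / lam n)"
      by (rule ext) (simp add: pk_def wn_def)
    have "((\<lambda>s. \<Sum>n<J. (wn n s)^2 / lam n) has_real_derivative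
            (\<Sum>n<J. of_nat 2 * ((-(lam n)\<^sup>2 * wn n x - lam n * gn n x) * wn n x ^ (2 - Suc 0)) / lam n))
          (at x within {-T..0})"
      by (intro DERIV_sum DERIV_cdivide DERIV_power dwn x)
    moreover have "(\<Sum>n<J. of_nat 2 * ((-(lam n)\<^sup>2 * wn n x - lam n * gn n x) * wn n x ^ (2 - Suc 0)) / lam n)
        = fdv J x"
      unfolding fdv_def by (intro sum.cong) (auto simp: algebra_simps)
    ultimately show ?thesis using eq by simp
  qed
  have fdv_eq: "fdv J x = -2*(\<Sum>n<J. lam n * (wn n x)\<^sup>2) - 2 * inner (projP e J (w x)) (g x)" for J x
  proof -
    have "inner (projP e J (w x)) (g x) = (\<Sum>n<J. wn n x * gn n x)"
      unfolding projP_def inner_sum_left inner_scaleR_left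
      by (intro sum.cong refl) (simp add: wn_def gn_def inner_commute)
    moreover have "fdv J x = (\<Sum>n<J. -2 * (lam n * (wn n x)\<^sup>2) - 2 * (wn n x * gn n x))"
      unfolding fdv_def using lpos
      by (intro sum.cong refl) (simp add: field_simps power2_eq_square less_imp_neq[symmetric])
    ultimately show ?thesis by (simp add: sum_subtractf sum_distrib_left)
  qed
  have gbound: "norm (g x) \<le> L * norm (w x)" for x
    using F unfolding lipschitz_on_def g_def w_def by (simp add: dist_norm)
  have wsplit: "norm (w x) \<le> norm (projP e K (w x)) + norm (w x - projP e K (w x))" for x
    using norm_triangle_ineq[of "projP e K (w x)" "w x - projP e K (w x)"] by simp
  define sg where "sg = sqrt (lam N)"
  have sg0: "0 \<le> sg" using lpos[of N] by (simp add: sg_def)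
  have sg2: "sg\<^sup>2 = lam N" using lpos[of N] by (simp add: sg_def)
  have sg4: "sg^4 = (lam N)\<^sup>2"
  proof -
    have "sg^4 = (sg\<^sup>2)\<^sup>2" by (simp flip: power_mult)
    thus ?thesis using sg2 by simp
  qed
  define Gf where "Gf s = ln (p s) - ln (pk e lam K (w s)) / 2 + c * s" for s
  have pK_ge: "p s \<le> pk e lam K (w s)" for s unfolding p_def by (rule pk_mono[OF sd NK])
  have pK_le: "pk e lam K (w s) \<le> 2 * p s" if s: "s \<in> {-T..0}" for s
  proof -
    have "pk e lam K (w s) \<le> hm1_sq e lam (w s)" unfolding pk_def by (rule partial_le_hm1[OF sd])
    also have "\<dots> \<le> 2 * hm1_sq e lam (projP e N (w s))"
      using cone s by (intro cone_bound[OF sd]) (simp add: w_def)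
    finally show ?thesis by (simp add: hm1_projP[OF sd] p_def pk_def)
  qed
  have "Gf a \<le> Gf b"
  proof (rule DERIV_nonneg_imp_increasing_open[OF ab(2)])
    show "continuous_on {a..b} Gf"
    proof -
      have A: "pk e lam K (w s) \<noteq> 0" "pk e lam N (w s) \<noteq> 0" if "s \<in> {a..b}" for s
        using ppos[OF that] pK_ge[of s] unfolding p_def by linarith+
      show ?thesis unfolding Gf_def p_def using pkc A
        by (intro continuous_intros) auto
    qed
  next
    fix x assume xa: "a < x" and xb: "x < b"
    have xT: "x \<in> {-T..0}" using xa xb ab by auto
    have xab: "x \<in> {a..b}" using xa xb by auto
    have atx: "at x within {-T..0} = at x" using xa xb ab by (intro at_within_Icc_at) auto
    define pd where "pd = fdv N x"
    define fd where "fd = fdv K x"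
    define Ph where "Ph = pk e lam K (w x)"
    have px: "0 < p x" using ppos[OF xab] .
    have Ph: "p x \<le> Ph" "Ph \<le> 2 * p x" using pK_ge pK_le[OF xT] by (auto simp: Ph_def)
    have dp: "DERIV p x :> pd" using dpk[OF xT, of N] atx by (simp add: p_def[abs_def] pd_def)
    have dPh: "DERIV (\<lambda>s. pk e lam K (w s)) x :> fd" using dpk[OF xT, of K] atx by (simp add: fd_def)
    have d1: "DERIV (\<lambda>s. ln (p s)) x :> 1 / p x * pd"
      by (rule DERIV_chain2[OF DERIV_ln_divide[OF px] dp])
    have d2: "DERIV (\<lambda>s. ln (pk e lam K (w s))) x :> 1 / Ph * fd"
      unfolding Ph_def by (rule DERIV_chain2[OF DERIV_ln_divide dPh]) (use px Ph in \<open>simp add: Ph_def\<close>)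
    have "DERIV Gf x :> (1 / p x * pd - 1 / Ph * fd / 2 + c)"
      unfolding Gf_def[abs_def]
      by (intro DERIV_add DERIV_diff DERIV_cdivide d1 d2) (simp add: DERIV_cmult_Id)
    moreover have "0 \<le> 1 / p x * pd - 1 / Ph * fd / 2 + c"
    proof -
      define r where "r = norm (projP e K (w x))"
      define t where "t = norm (w x - projP e K (w x))"
      define nP where "nP = norm (projP e N (w x))"
      define YN where "YN = (\<Sum>n<N. lam n * (wn n x)\<^sup>2)"
      define Y where "Y = (\<Sum>n<K. lam n * (wn n x)\<^sup>2)"
      define G where "G = norm (g x)"
      have "0 \<le> pd/p x - fd/(2*Ph) + cst L sg"
        unfolding cst_def
      proof (rule key_ineq)
        show "0 < p x" by fact
        show "p x \<le> Ph" "Ph \<le> 2 * p x" by (fact Ph(1), fact Ph(2))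
        show "0 \<le> r" "0 \<le> t" "0 \<le> L" "0 \<le> sg" "0 \<le> nP" "0 \<le> G"
          using L0 sg0 by (auto simp: r_def t_def nP_def G_def)
        show "t\<^sup>2 \<le> p x" unfolding t_def by (rule tail[OF xab])
        show "nP \<le> sg * sqrt (p x)"
        proof -
          have "nP\<^sup>2 = (\<Sum>n<N. (wn n x)\<^sup>2)" unfolding nP_def wn_def by (rule norm_projP_sq[OF sd])
          also have "\<dots> \<le> (\<Sum>n<N. lam N * ((wn n x)\<^sup>2 / lam n))"
          proof (intro sum_mono)
            fix n assume "n \<in> {..<N}"
            hence "lam n \<le> lam N" by (intro sd_lam_mono[OF sd]) auto
            hence "lam n * ((wn n x)\<^sup>2 / lam n) \<le> lam N * ((wn n x)\<^sup>2 / lam n)"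
              using lpos[of n] by (intro mult_right_mono) auto
            thus "(wn n x)\<^sup>2 \<le> lam N * ((wn n x)\<^sup>2 / lam n)" using lpos[of n] by simp
          qed
          also have "\<dots> = lam N * p x"
            by (simp add: p_def pk_def wn_def sum_distrib_left)
          also have "lam N * p x = (sg * sqrt (p x))\<^sup>2"
          proof -
            have "sg\<^sup>2 = lam N" using lpos[of N] unfolding sg_def by simp
            moreover have "(sqrt (p x))\<^sup>2 = p x" using px by simp
            ultimately show ?thesis by (simp add: power_mult_distrib)
          qed
          finally have le: "nP\<^sup>2 \<le> (sg * sqrt (p x))\<^sup>2" .
          have "0 \<le> sg * sqrt (p x)" using sg0 px by simp
          thus ?thesis using le by (rule power2_le_imp_le[rotated])
        qed
        show "YN \<le> sg^4 * p x"
        proof -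
          have "YN \<le> (\<Sum>n<N. (lam N)\<^sup>2 * ((wn n x)\<^sup>2 / lam n))"
            unfolding YN_def
          proof (intro sum_mono)
            fix n assume "n \<in> {..<N}"
            hence "lam n \<le> lam N" by (intro sd_lam_mono[OF sd]) auto
            hence "(lam n)\<^sup>2 \<le> (lam N)\<^sup>2" using lpos[of n] by (intro power_mono) auto
            hence "(lam n)\<^sup>2 * ((wn n x)\<^sup>2 / lam n) \<le> (lam N)\<^sup>2 * ((wn n x)\<^sup>2 / lam n)"
              using lpos[of n] by (intro mult_right_mono) auto
            thus "lam n * (wn n x)\<^sup>2 \<le> (lam N)\<^sup>2 * ((wn n x)\<^sup>2 / lam n)"
              using lpos[of n] by (simp add: power2_eq_square)
          qed
          also have "\<dots> = sg^4 * p x"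
            unfolding sg4 by (simp add: p_def pk_def wn_def sum_distrib_left)
          finally show ?thesis .
        qed
        show "pd \<ge> -2*YN - 2*nP*G"
        proof -
          have "inner (projP e N (w x)) (g x) \<le> nP * G"
            unfolding nP_def G_def by (rule norm_cauchy_schwarz)
          thus ?thesis unfolding pd_def fdv_eq YN_def by linarith
        qed
        show "G \<le> L*(r+t)"
          using gbound[of x] wsplit[of x] L0 unfolding G_def r_def t_def
          by (meson mult_left_mono order_trans)
        show "(r\<^sup>2)\<^sup>2 \<le> Y*Ph"
        proof -
          have r2: "r\<^sup>2 = (\<Sum>n<K. (wn n x / sqrt (lam n)) * (sqrt (lam n) * wn n x))"
            unfolding r_def norm_projP_sq[OF sd] wn_def using lpos
            by (intro sum.cong refl) (simp add: power2_eq_square less_imp_neq[symmetric] field_simps)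
          have "(r\<^sup>2)\<^sup>2 \<le> (\<Sum>n<K. (wn n x / sqrt (lam n))\<^sup>2) * (\<Sum>n<K. (sqrt (lam n) * wn n x)\<^sup>2)"
            unfolding r2 by (rule Cauchy_Schwarz_ineq_sum)
          also have "(\<Sum>n<K. (wn n x / sqrt (lam n))\<^sup>2) = Ph"
            unfolding Ph_def pk_def wn_def using lpos
            by (intro sum.cong refl) (simp add: power_divide less_imp_le)
          also have "(\<Sum>n<K. (sqrt (lam n) * wn n x)\<^sup>2) = Y"
            unfolding Y_def using lpos
            by (intro sum.cong refl) (simp add: power_mult_distrib less_imp_le)
          finally show ?thesis by (simp add: mult.commute)
        qed
        show "fd \<le> -2*Y + 2*r*G"
        proof -
          have "- inner (projP e K (w x)) (g x) \<le> r * G"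
            using Cauchy_Schwarz_ineq2[of "projP e K (w x)" "g x"] unfolding r_def G_def by linarith
          thus ?thesis unfolding fd_def fdv_eq Y_def by linarith
        qed
      qed
      thus ?thesis using px Ph by (simp add: c_def sg_def field_simps)
    qed
    ultimately show "\<exists>y. DERIV Gf x :> y \<and> 0 \<le> y" by blast
  qed
  have aT: "a \<in> {-T..0}" "b \<in> {-T..0}" using ab by auto
  have pa: "0 < p a" "0 < p b" using ppos ab by auto
  have "ln (pk e lam K (w a)) \<le> ln (2 * p a)"
    using pK_le[OF aT(1)] pK_ge[of a] pa by (subst ln_le_cancel_iff) auto
  moreover have "ln (p b) \<le> ln (pk e lam K (w b))"
    using pK_ge[of b] pa by (subst ln_le_cancel_iff) auto
  moreover have "ln (2 * p a) = ln 2 + ln (p a)" using pa by (simp add: ln_mult)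
  moreover note \<open>Gf a \<le> Gf b\<close>
  ultimately have "ln (p a) \<le> ln 2 + ln (p b) + 2 * c * (b - a)"
    unfolding Gf_def by (simp add: algebra_simps)
  also have "\<dots> = ln (2 * exp (2 * c * (b-a)) * p b)"
    using pa by (simp add: ln_mult)
  finally have "p a \<le> 2 * exp (2 * c * (b-a)) * p b"
    using pa by (subst (asm) ln_le_cancel_iff) auto
  thus ?thesis by (simp add: p_def w_def c_def)
qed



lemma cst_nonneg: "0 \<le> L \<Longrightarrow> 0 \<le> sg \<Longrightarrow> 0 \<le> cst L sg"
  unfolding cst_def by simp

theorem lemma2p1:
  fixes e :: "nat \<Rightarrow> 'a::{real_inner,complete_space}" and lam :: "nat \<Rightarrow> real"
    and N :: nat and L :: real
  assumes "spectral_data e lam"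
  shows "\<exists>C \<alpha>. C > 0 \<and> \<alpha> > 0 \<and>
     (\<forall>F :: 'a \<Rightarrow> 'a. bounded (range F) \<longrightarrow> L-lipschitz_on UNIV F \<longrightarrow>
       (\<forall>T u1 u2. T > 0 \<longrightarrow> is_solution e lam F T u1 \<longrightarrow> is_solution e lam F T u2 \<longrightarrow>
          (\<forall>t\<in>{-T..0}. u1 t - u2 t \<in> Kplus e lam N) \<longrightarrow>
          hm1_sq e lam (u1 (-T) - u2 (-T))
            \<le> C * exp (\<alpha> * T) * hm1_sq e lam (projP e N (u1 0) - projP e N (u2 0))))"
proof -
  note sd = assms
  define c where "c = cst \<bar>L\<bar> (sqrt (lam N))"
  have c0: "0 \<le> c" unfolding c_def by (rule cst_nonneg) (auto simp: sd_lam_pos[OF sd] less_imp_le)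
  have main: "hm1_sq e lam (u1 (-T) - u2 (-T))
            \<le> 4 * exp ((2*c+1) * T) * hm1_sq e lam (projP e N (u1 0) - projP e N (u2 0))"
    if F: "L-lipschitz_on UNIV F" and T: "T > 0" and s1: "is_solution e lam F T u1"
      and s2: "is_solution e lam F T u2" and cone: "\<forall>t\<in>{-T..0}. u1 t - u2 t \<in> Kplus e lam N"
    for F :: "'a \<Rightarrow> 'a" and T u1 u2
  proof -
    have L0: "0 \<le> L" using F by (simp add: lipschitz_on_def)
    hence cL: "c = cst L (sqrt (lam N))" by (simp add: c_def)
    define p where "p s = pk e lam N (u1 s - u2 s)" for s
    have p0: "0 \<le> p s" for s unfolding p_def by (rule pk_nonneg[OF sd])
    have lhs: "hm1_sq e lam (u1 (-T) - u2 (-T)) \<le> 2 * p (-T)"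
      using cone_bound[OF sd, of "u1 (-T) - u2 (-T)" N] cone T
      by (simp add: hm1_projP[OF sd] p_def pk_def)
    have rhs: "hm1_sq e lam (projP e N (u1 0) - projP e N (u2 0)) = p 0"
      by (simp add: projP_diff hm1_projP[OF sd] p_def pk_def)
    have wc: "continuous_on {-T..0} (\<lambda>s. u1 s - u2 s)"
      using sol_cont[OF s1] sol_cont[OF s2] by (intro continuous_intros)
    have pc: "continuous_on {-T..0} p"
      unfolding p_def pk_def using sd_lam_pos[OF sd]
      by (intro continuous_intros wc) (simp add: less_imp_neq[symmetric])
    have loc: "p a \<le> 2 * exp (2 * c * (b-a)) * p b"
      if "-T \<le> a" "a \<le> b" "b \<le> 0" "\<forall>s\<in>{a..b}. 0 < p s" for a b
      using local_est[OF sd F s1 s2 cone that(1-3)] that(4) unfolding p_def cL by blast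
    have key: "p (-T) \<le> 2 * exp (2 * c * T) * p 0"
    proof (cases "p (-T) = 0")
      case True thus ?thesis using p0[of 0] by simp
    next
      case False
      hence pT: "0 < p (-T)" using p0[of "-T"] by linarith
      define m where "m = p (-T) / (2 * exp (2 * c * T))"
      have m0: "0 < m" using pT by (simp add: m_def)
      have ecT: "1 \<le> exp (2 * c * T)" using c0 T by simp
      have mT: "m/2 < p (-T)"
      proof -
        have "m \<le> p (-T) / 2" unfolding m_def using pT ecT
          by (intro divide_left_mono) auto
        thus ?thesis using pT by linarith
      qed
      define Z where "Z = {-T..0} \<inter> p -` {..m/2}"
      show ?thesis
      proof (cases "Z = {}")
        case True
        hence "\<forall>s\<in>{-T..0}. 0 < p s" using m0 unfolding Z_def by fastforce
        thus ?thesis using loc[of "-T" 0] T by simp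
      next
        case False
        have Zc: "closed Z" unfolding Z_def by (rule continuous_closed_preimage[OF pc]) auto
        have Zb: "bdd_below Z" unfolding Z_def by (rule bdd_belowI[of _ "-T"]) auto
        define s0 where "s0 = Inf Z"
        have s0Z: "s0 \<in> Z" unfolding s0_def by (rule closed_contains_Inf[OF False Zb Zc])
        hence s0: "-T \<le> s0" "s0 \<le> 0" "p s0 \<le> m/2" by (auto simp: Z_def)
        have below: "s0 \<le> s" if "s \<in> Z" for s unfolding s0_def by (rule cInf_lower[OF that Zb])
        have pcs: "continuous_on {-T..s0} p" using s0 by (intro continuous_on_subset[OF pc]) auto
        obtain x where x: "-T \<le> x" "x \<le> s0" "p x = m/2"
          using IVT2'[of p s0 "m/2" "-T", OF s0(3) _ s0(1) pcs] mT by auto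
        have "x \<in> Z" using x s0 by (auto simp: Z_def)
        hence "x = s0" using below x by force
        hence ps0: "p s0 = m/2" using x by simp
        have posl: "\<forall>s\<in>{-T..s0}. 0 < p s"
        proof
          fix s assume s: "s \<in> {-T..s0}"
          show "0 < p s"
          proof (cases "s = s0")
            case True thus ?thesis using ps0 m0 by simp
          next
            case False
            hence "s < s0" using s by auto
            hence "s \<notin> Z" using below by force
            hence "m/2 < p s" using s s0 by (auto simp: Z_def)
            thus ?thesis using m0 by linarith
          qed
        qed
        have "p (-T) \<le> 2 * exp (2 * c * (s0 - -T)) * p s0"
          by (rule loc[OF order_refl s0(1) s0(2) posl])
        also have "\<dots> \<le> 2 * exp (2 * c * T) * (m/2)"
        proof -
          have "c * (s0 + T) \<le> c * T" using s0 c0 by (intro mult_left_mono) auto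
          hence "exp (2 * c * (s0 - -T)) \<le> exp (2 * c * T)" by simp
          thus ?thesis using m0 ps0 by (intro mult_mono) auto
        qed
        also have "\<dots> = p (-T) / 2" unfolding m_def by simp
        finally show ?thesis using pT by linarith
      qed
    qed
    have "exp (2 * c * T) \<le> exp ((2*c+1) * T)" using T by (simp add: algebra_simps)
    hence "2 * exp (2 * c * T) * p 0 \<le> 2 * exp ((2*c+1) * T) * p 0" using p0[of 0] by (intro mult_right_mono mult_left_mono) auto
    hence "hm1_sq e lam (u1 (-T) - u2 (-T)) \<le> 2 * (2 * exp ((2*c+1) * T) * p 0)"
      using lhs key by linarith
    thus ?thesis unfolding rhs by simp
  qed
  show ?thesis
    apply (rule exI[of _ 4], rule exI[of _ "2*c+1"])
    using c0 main by auto
qed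


end
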